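(* Let $\alpha\in(0,1)$. With the full conformal region $\hat C_\alpha(X_{n+1})$, the upper approximate region $\tilde C_\alpha(X_{n+1})$ and the lower approximate region $\tilde C^{\mathrm{lo}}_\alpha(X_{n+1})$ as in the context, almost surely $$\tilde C^{\mathrm{lo}}_\alpha(X_{n+1})\subseteq\hat C_\alpha(X_{n+1})\subseteq\tilde C_\alpha(X_{n+1}),$$ and consequently, almost surely, the thickness satisfies $$\mathrm{THK}_\alpha(X_{n+1})\le\mathcal L\big(\tilde C_\alpha(X_{n+1})\setminus\tilde C^{\mathrm{lo}}_\alpha(X_{n+1})\big).$$
   Context: Let $\mathcal X\subset\mathbb R^d$, $\mathcal Y\subset\mathbb R$. $D=\{(X_1,Y_1),\dots,(X_n,Y_n)\}$ are random variables with values in $\mathcal X\times\mathcal Y$ and $(X_{n+1},Y_{n+1})$ is a further random pair. For $y\in\mathcal Y$ let $D^y=D\cup\{(X_{n+1},y)\}$ and let $\hat f_{D^y}$ be a predictor trained on $D^y$. Given $s:\mathcal Y\times\mathcal Y\to\mathbb R_+$, set $S_{D^y}(X_i,Y_i)=s(Y_i,\hat f_{D^y}(X_i))$ for $1\le i\le n$, $S_{D^y}(X_{n+1},y)=s(y,\hat f_{D^y}(X_{n+1}))$, $\hat\pi_D(X_{n+1},y)=\frac{1+\sum_{i=1}^n\mathbb 1\{S_{D^y}(X_i,Y_i)\ge S_{D^y}(X_{n+1},y)\}}{n+1}$ and $\hat C_\alpha(X_{n+1})=\{y:\hat\pi_D(X_{n+1},y)>\alpha\}$. For every $y$ let $\tilde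 S_{D^y}(X_i,Y_i)$ ($i\le n$), $\tilde S_{D^y}(X_{n+1},y)$ be approximate scores and $0\le\tau_i(y)<\infty$ be such that $|S_{D^y}(X_i,Y_i)-\tilde S_{D^y}(X_i,Y_i)|\le\tau_i(y)$ ($i\le n$) and $|S_{D^y}(X_{n+1},y)-\tilde S_{D^y}(X_{n+1},y)|\le\tau_{n+1}(y)$. Define $\tilde\pi_D(X_{n+1},y)=\frac{1+\sum_{i=1}^n\mathbb 1\{\tilde S_{D^y}(X_i,Y_i)+\tau_i(y)\ge\tilde S_{D^y}(X_{n+1},y)-\tau_{n+1}(y)\}}{n+1}$, $\tilde C_\alpha(X_{n+1})=\{y:\tilde\pi_D(X_{n+1},y)>\alpha\}$, $\tilde\pi^{\mathrm{lo}}_D(X_{n+1},y)=\frac{1+\sum_{i=1}^n\mathbb 1\{\tilde S_{D^y}(X_i,Y_i)-\tau_i(y)\ge\tilde S_{D^y}(X_{n+1},y)+\tau_{n+1}(y)\}}{n+1}$, $\tilde C^{\mathrm{lo}}_\alpha(X_{n+1})=\{y:\tilde\pi^{\mathrm{lo}}_D(X_{n+1},y)>\alpha\}$. The thickness is $\mathrm{THK}_\alpha(X_{n+1})=\mathcal L\big(\tilde C_\alpha(X_{n+1})\,\Delta\,\hat C_\alpha(X_{n+1})\big)$, with $\mathcal L$ the Lebesgue measure and $\Delta$ the symmetric difference. *)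

theory Defs
  imports "HOL-Probability.Probability"
begin

text \<open>Augmented data set D^y = D together with (x, y), as an ordered list
  (training may depend on the order, so this is the most general reading).\<close>
definition aug_data :: "nat \<Rightarrow> (nat \<Rightarrow> 'x) \<Rightarrow> (nat \<Rightarrow> real) \<Rightarrow> 'x \<Rightarrow> real \<Rightarrow> ('x \<times> real) list" where
  "aug_data n Xs Ys x y = map (\<lambda>i. (Xs i, Ys i)) [1..<n+1] @ [(x, y)]"

definition score_cal :: "(('x \<times> real) list \<Rightarrow> 'x \<Rightarrow> real) \<Rightarrow> (real \<Rightarrow> real \<Rightarrow> real)
    \<Rightarrow> nat \<Rightarrow> (nat \<Rightarrow> 'x) \<Rightarrow> (nat \<Rightarrow> real) \<Rightarrow> 'x \<Rightarrow> real \<Rightarrow> nat \<Rightarrow> real" where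
  "score_cal fit s n Xs Ys x y i = s (Ys i) (fit (aug_data n Xs Ys x y) (Xs i))"

definition score_test :: "(('x \<times> real) list \<Rightarrow> 'x \<Rightarrow> real) \<Rightarrow> (real \<Rightarrow> real \<Rightarrow> real)
    \<Rightarrow> nat \<Rightarrow> (nat \<Rightarrow> 'x) \<Rightarrow> (nat \<Rightarrow> real) \<Rightarrow> 'x \<Rightarrow> real \<Rightarrow> real" where
  "score_test fit s n Xs Ys x y = s y (fit (aug_data n Xs Ys x y) x)"

definition conf_pval :: "(('x \<times> real) list \<Rightarrow> 'x \<Rightarrow> real) \<Rightarrow> (real \<Rightarrow> real \<Rightarrow> real)
    \<Rightarrow> nat \<Rightarrow> (nat \<Rightarrow> 'x) \<Rightarrow> (nat \<Rightarrow> real) \<Rightarrow> 'x \<Rightarrow> real \<Rightarrow> real" where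
  "conf_pval fit s n Xs Ys x y =
     (1 + real (card {i\<in>{1..n}. score_cal fit s n Xs Ys x y i \<ge> score_test fit s n Xs Ys x y}))
       / (real n + 1)"

definition conf_region :: "real \<Rightarrow> real set \<Rightarrow> (('x \<times> real) list \<Rightarrow> 'x \<Rightarrow> real) \<Rightarrow> (real \<Rightarrow> real \<Rightarrow> real)
    \<Rightarrow> nat \<Rightarrow> (nat \<Rightarrow> 'x) \<Rightarrow> (nat \<Rightarrow> real) \<Rightarrow> 'x \<Rightarrow> real set" where
  "conf_region \<alpha> Yset fit s n Xs Ys x = {y\<in>Yset. conf_pval fit s n Xs Ys x y > \<alpha>}"

text \<open>Approximate p-values; St y i is the approximate score (i = n+1 is the test point),
  tau y i the error bound.\<close>
definition approx_pval_up :: "(real \<Rightarrow> nat \<Rightarrow> real) \<Rightarrow> (real \<Rightarrow> nat \<Rightarrow> real) \<Rightarrow> nat \<Rightarrow> real \<Rightarrow> real" where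
  "approx_pval_up St tau n y =
     (1 + real (card {i\<in>{1..n}. St y i + tau y i \<ge> St y (n+1) - tau y (n+1)})) / (real n + 1)"

definition approx_pval_lo :: "(real \<Rightarrow> nat \<Rightarrow> real) \<Rightarrow> (real \<Rightarrow> nat \<Rightarrow> real) \<Rightarrow> nat \<Rightarrow> real \<Rightarrow> real" where
  "approx_pval_lo St tau n y =
     (1 + real (card {i\<in>{1..n}. St y i - tau y i \<ge> St y (n+1) + tau y (n+1)})) / (real n + 1)"

definition approx_region_up :: "real \<Rightarrow> real set \<Rightarrow> (real \<Rightarrow> nat \<Rightarrow> real) \<Rightarrow> (real \<Rightarrow> nat \<Rightarrow> real) \<Rightarrow> nat \<Rightarrow> real set" where
  "approx_region_up \<alpha> Yset St tau n = {y\<in>Yset. approx_pval_up St tau n y > \<alpha>}"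

definition approx_region_lo :: "real \<Rightarrow> real set \<Rightarrow> (real \<Rightarrow> nat \<Rightarrow> real) \<Rightarrow> (real \<Rightarrow> nat \<Rightarrow> real) \<Rightarrow> nat \<Rightarrow> real set" where
  "approx_region_lo \<alpha> Yset St tau n = {y\<in>Yset. approx_pval_lo St tau n y > \<alpha>}"

text \<open>Lebesgue (outer) measure of an arbitrary subset of the reals; agrees with the
  Lebesgue measure on Lebesgue-measurable sets.\<close>
definition leb_outer :: "real set \<Rightarrow> ennreal" where
  "leb_outer A = (INF B\<in>{B\<in>sets lebesgue. A \<subseteq> B}. emeasure lebesgue B)"

definition sym_diff :: "'a set \<Rightarrow> 'a set \<Rightarrow> 'a set" where
  "sym_diff A B = (A - B) \<union> (B - A)"

end

theory Submission
  imports Defs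
begin

lemma leb_outer_mono: "A \<subseteq> A' \<Longrightarrow> leb_outer A \<le> leb_outer A'"
  unfolding leb_outer_def by (rule INF_superset_mono) auto

lemma card_mono_filter:
  assumes "\<And>i. i \<in> {1..n::nat} \<Longrightarrow> P i \<Longrightarrow> Q i"
  shows "card {i\<in>{1..n}. P i} \<le> card {i\<in>{1..n}. Q i}"
  by (rule card_mono) (use assms in auto)

lemma pw_incl:
  fixes St tau :: "real \<Rightarrow> nat \<Rightarrow> real"
  assumes cal: "\<And>y i. y \<in> Yset \<Longrightarrow> i \<in> {1..n} \<Longrightarrow>
           \<bar>score_cal fit s n Xs Ys x y i - St y i\<bar> \<le> tau y i"
    and tst: "\<And>y. y \<in> Yset \<Longrightarrow>
           \<bar>score_test fit s n Xs Ys x y - St y (n+1)\<bar> \<le> tau y (n+1)"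
  shows "approx_region_lo \<alpha> Yset St tau n \<subseteq> conf_region \<alpha> Yset fit s n Xs Ys x
     \<and> conf_region \<alpha> Yset fit s n Xs Ys x \<subseteq> approx_region_up \<alpha> Yset St tau n"
proof (intro conjI subsetI)
  fix y assume y: "y \<in> approx_region_lo \<alpha> Yset St tau n"
  hence yY: "y \<in> Yset" by (simp add: approx_region_lo_def)
  have "card {i\<in>{1..n}. St y i - tau y i \<ge> St y (n+1) + tau y (n+1)}
     \<le> card {i\<in>{1..n}. score_cal fit s n Xs Ys x y i \<ge> score_test fit s n Xs Ys x y}"
    apply (rule card_mono_filter)
    using cal[OF yY] tst[OF yY] by (smt (verit))
  hence "approx_pval_lo St tau n y \<le> conf_pval fit s n Xs Ys x y"
    unfolding approx_pval_lo_def conf_pval_def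
    by (intro divide_right_mono) auto
  thus "y \<in> conf_region \<alpha> Yset fit s n Xs Ys x" using y
    by (auto simp: approx_region_lo_def conf_region_def)
next
  fix y assume y: "y \<in> conf_region \<alpha> Yset fit s n Xs Ys x"
  hence yY: "y \<in> Yset" by (simp add: conf_region_def)
  have "card {i\<in>{1..n}. score_cal fit s n Xs Ys x y i \<ge> score_test fit s n Xs Ys x y}
     \<le> card {i\<in>{1..n}. St y i + tau y i \<ge> St y (n+1) - tau y (n+1)}"
    apply (rule card_mono_filter)
    using cal[OF yY] tst[OF yY] by (smt (verit))
  hence "conf_pval fit s n Xs Ys x y \<le> approx_pval_up St tau n y"
    unfolding approx_pval_up_def conf_pval_def
    by (intro divide_right_mono) auto
  thus "y \<in> approx_region_up \<alpha> Yset St tau n" using y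
    by (auto simp: approx_region_up_def conf_region_def)
qed

lemma pw_thk:
  assumes "L \<subseteq> C \<and> C \<subseteq> U"
  shows "leb_outer (sym_diff U C) \<le> leb_outer (U - L)"
  by (rule leb_outer_mono) (use assms in \<open>auto simp: sym_diff_def\<close>)

theorem lemma7:
  fixes M :: "'w measure"
    and X :: "nat \<Rightarrow> 'w \<Rightarrow> real ^ 'd" and Y :: "nat \<Rightarrow> 'w \<Rightarrow> real"
    and Xset :: "(real ^ 'd) set" and Yset :: "real set"
    and fit :: "((real ^ 'd) \<times> real) list \<Rightarrow> real ^ 'd \<Rightarrow> real"
    and s :: "real \<Rightarrow> real \<Rightarrow> real"
    and St :: "'w \<Rightarrow> real \<Rightarrow> nat \<Rightarrow> real" and tau :: "'w \<Rightarrow> real \<Rightarrow> nat \<Rightarrow> real"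
    and n :: nat and \<alpha> :: real
  assumes "prob_space M"
    and "\<And>i. i \<in> {1..n+1} \<Longrightarrow> X i \<in> borel_measurable M"
    and "\<And>i. i \<in> {1..n+1} \<Longrightarrow> Y i \<in> borel_measurable M"
    and "\<And>i \<omega>. i \<in> {1..n+1} \<Longrightarrow> \<omega> \<in> space M \<Longrightarrow> X i \<omega> \<in> Xset \<and> Y i \<omega> \<in> Yset"
    and "\<And>a b. s a b \<ge> 0"
    and "0 < \<alpha>" and "\<alpha> < 1"
    and "\<And>\<omega> y i. \<omega> \<in> space M \<Longrightarrow> y \<in> Yset \<Longrightarrow> i \<in> {1..n+1} \<Longrightarrow> 0 \<le> tau \<omega> y i"
    and "\<And>\<omega> y i. \<omega> \<in> space M \<Longrightarrow> y \<in> Yset \<Longrightarrow> i \<in> {1..n} \<Longrightarrow>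
           \<bar>score_cal fit s n (\<lambda>j. X j \<omega>) (\<lambda>j. Y j \<omega>) (X (n+1) \<omega>) y i - St \<omega> y i\<bar> \<le> tau \<omega> y i"
    and "\<And>\<omega> y. \<omega> \<in> space M \<Longrightarrow> y \<in> Yset \<Longrightarrow>
           \<bar>score_test fit s n (\<lambda>j. X j \<omega>) (\<lambda>j. Y j \<omega>) (X (n+1) \<omega>) y - St \<omega> y (n+1)\<bar> \<le> tau \<omega> y (n+1)"
  shows "(AE \<omega> in M.
            approx_region_lo \<alpha> Yset (St \<omega>) (tau \<omega>) n
              \<subseteq> conf_region \<alpha> Yset fit s n (\<lambda>j. X j \<omega>) (\<lambda>j. Y j \<omega>) (X (n+1) \<omega>)
          \<and> conf_region \<alpha> Yset fit s n (\<lambda>j. X j \<omega>) (\<lambda>j. Y j \<omega>) (X (n+1) \<omega>)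
              \<subseteq> approx_region_up \<alpha> Yset (St \<omega>) (tau \<omega>) n)
       \<and> (AE \<omega> in M.
            leb_outer (sym_diff (approx_region_up \<alpha> Yset (St \<omega>) (tau \<omega>) n)
                                (conf_region \<alpha> Yset fit s n (\<lambda>j. X j \<omega>) (\<lambda>j. Y j \<omega>) (X (n+1) \<omega>)))
            \<le> leb_outer (approx_region_up \<alpha> Yset (St \<omega>) (tau \<omega>) n
                          - approx_region_lo \<alpha> Yset (St \<omega>) (tau \<omega>) n))"
proof -
  have P: "\<forall>\<omega>\<in>space M.
            approx_region_lo \<alpha> Yset (St \<omega>) (tau \<omega>) n
              \<subseteq> conf_region \<alpha> Yset fit s n (\<lambda>j. X j \<omega>) (\<lambda>j. Y j \<omega>) (X (n+1) \<omega>)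
          \<and> conf_region \<alpha> Yset fit s n (\<lambda>j. X j \<omega>) (\<lambda>j. Y j \<omega>) (X (n+1) \<omega>)
              \<subseteq> approx_region_up \<alpha> Yset (St \<omega>) (tau \<omega>) n"
    using pw_incl assms(9,10) by metis
  show ?thesis
    using P pw_thk by (auto intro!: AE_I2)
qed

end
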